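(* Let $H \cong K_n - M$, where $M$ is a matching of $K_n$, and let $g$ be a demand function for $H$. Let $V(M)$ denote the set of endpoints of edges in $M$. If $L$ is a fractional list-assignment for $H$ such that (i) for each $v\in V(H)\setminus V(M)$, $\mu(L(v)) \geq \sum_{u\in V(H)\setminus V(M)}g(u) + \sum_{uw\in M}\max\{g(u), g(w)\}$, (ii) for each $v\in V(M)$, $\mu(L(v)) \geq g(v) + \sum_{uw\in M,\, v\notin \{u,w\}}\max\{g(u), g(w)\}$, and (iii) for each $uv\in M$, $\mu(L(u)) + \mu(L(v)) \geq \sum_{w\in V(H)}g(w)$, then $H$ has a fractional $(g, L)$-coloring.
   Context: $\mu$ is Lebesgue measure. A demand function for a graph $H$ is a function $g: V(H)\to [0,1]\cap\mathbb{Q}$. A fractional list-assignment is a function $L$ assigning to each vertex a measurable subset $L(v)\subseteq[0,1]$. A fractional $(g,L)$-coloring of $H$ is an assignment $\phi$ of measurable sets $\phi(v)\subseteq L(v)$ with $\mu(\phi(v))\geq g(v)$ for every vertex and $\phi(u)\cap\phi(v)=\varnothing$ for every edge $uv$ of $H$. *)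

theory Defs
  imports "HOL-Analysis.Analysis"
begin

definition complete_edges :: "'a set \<Rightarrow> 'a set set" where
  "complete_edges V = {{u, v} | u v. u \<in> V \<and> v \<in> V \<and> u \<noteq> v}"

definition is_matching :: "'a set \<Rightarrow> 'a set set \<Rightarrow> bool" where
  "is_matching V M \<longleftrightarrow> M \<subseteq> complete_edges V \<and>
     (\<forall>e\<in>M. \<forall>e'\<in>M. e \<noteq> e' \<longrightarrow> e \<inter> e' = {})"

definition demand_function :: "'a set \<Rightarrow> ('a \<Rightarrow> real) \<Rightarrow> bool" where
  "demand_function V g \<longleftrightarrow> (\<forall>v\<in>V. g v \<in> \<rat> \<and> 0 \<le> g v \<and> g v \<le> 1)"

definition frac_list_assignment :: "'a set \<Rightarrow> ('a \<Rightarrow> real set) \<Rightarrow> bool" where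
  "frac_list_assignment V L \<longleftrightarrow> (\<forall>v\<in>V. L v \<in> sets lebesgue \<and> L v \<subseteq> {0..1})"

definition frac_coloring ::
  "'a set \<Rightarrow> 'a set set \<Rightarrow> ('a \<Rightarrow> real) \<Rightarrow> ('a \<Rightarrow> real set) \<Rightarrow> ('a \<Rightarrow> real set) \<Rightarrow> bool" where
  "frac_coloring V E g L \<phi> \<longleftrightarrow>
     (\<forall>v\<in>V. \<phi> v \<in> sets lebesgue \<and> \<phi> v \<subseteq> L v \<and> measure lebesgue (\<phi> v) \<ge> g v) \<and>
     (\<forall>u\<in>V. \<forall>v\<in>V. {u, v} \<in> E \<longrightarrow> \<phi> u \<inter> \<phi> v = {})"

end

theory Submission
  imports Defs
begin


lemma fm01: "S \<in> sets lebesgue \<Longrightarrow> S \<subseteq> {0..1::real} \<Longrightarrow> S \<in> fmeasurable lebesgue"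
  by (rule fmeasurableI2[of "{0..1}"]) auto

lemma mdiff: "A \<in> fmeasurable lebesgue \<Longrightarrow> B \<in> sets lebesgue \<Longrightarrow>
   measure lebesgue (A - B) = measure lebesgue A - measure lebesgue (A \<inter> B)"
proof -
  assume a: "A \<in> fmeasurable lebesgue" "B \<in> sets lebesgue"
  have "A - B = A - (A \<inter> B)" by auto
  moreover have "measure lebesgue (A - (A \<inter> B)) = measure lebesgue A - measure lebesgue (A \<inter> B)"
    using a by (intro measure_Diff) (auto simp: fmeasurable_def)
  ultimately show ?thesis by simp
qed

lemma fmcut: "E \<in> sets lebesgue \<Longrightarrow> E \<subseteq> {0..1::real} \<Longrightarrow> E \<inter> {..s} \<in> fmeasurable lebesgue"
  by (rule fmeasurable_Int_fmeasurable[OF fm01]) auto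

lemma cut_mono: "E \<in> sets lebesgue \<Longrightarrow> E \<subseteq> {0..1::real} \<Longrightarrow> s \<le> t \<Longrightarrow>
  measure lebesgue (E \<inter> {..s}) \<le> measure lebesgue (E \<inter> {..t})"
  by (rule measure_mono_fmeasurable) (auto intro: fmcut)

lemma cut_lip: "E \<in> sets lebesgue \<Longrightarrow> E \<subseteq> {0..1::real} \<Longrightarrow> s \<le> t \<Longrightarrow>
  measure lebesgue (E \<inter> {..t}) \<le> measure lebesgue (E \<inter> {..s}) + (t - s)"
proof -
  assume a: "E \<in> sets lebesgue" "E \<subseteq> {0..1::real}" "s \<le> t"
  have "E \<inter> {..t} \<subseteq> (E \<inter> {..s}) \<union> {s..t}" by auto
  hence "measure lebesgue (E \<inter> {..t}) \<le> measure lebesgue ((E \<inter> {..s}) \<union> {s..t})"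
    using a fmcut[OF a(1,2), of s] by (intro measure_mono_fmeasurable) (auto intro!: fmeasurable.Un)
  also have "\<dots> \<le> measure lebesgue (E \<inter> {..s}) + measure lebesgue {s..t}"
    using a by (intro measure_Un_le) auto
  finally show ?thesis using a by simp
qed

lemma cut_cont: "E \<in> sets lebesgue \<Longrightarrow> E \<subseteq> {0..1::real} \<Longrightarrow>
  continuous_on S (\<lambda>s. measure lebesgue (E \<inter> {..s}))"
proof -
  assume a: "E \<in> sets lebesgue" "E \<subseteq> {0..1::real}"
  have "1-lipschitz_on S (\<lambda>s. measure lebesgue (E \<inter> {..s}))"
  proof (rule lipschitz_onI)
    fix x y assume "x \<in> S" "y \<in> S"
    show "dist (measure lebesgue (E \<inter> {..x})) (measure lebesgue (E \<inter> {..y})) \<le> 1 * dist x y"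
    proof (cases "x \<le> y")
      case True thus ?thesis using cut_lip[OF a True] cut_mono[OF a True]
        by (simp add: dist_real_def)
    next
      case False hence "y \<le> x" by simp
      thus ?thesis using cut_lip[OF a \<open>y \<le> x\<close>] cut_mono[OF a \<open>y \<le> x\<close>]
        by (simp add: dist_real_def)
    qed
  qed simp
  thus ?thesis by (rule lipschitz_on_continuous_on)
qed

lemma cut_low: "E \<subseteq> {0..1::real} \<Longrightarrow> E \<inter> {..-1} = {}" by auto
lemma cut_high: "E \<subseteq> {0..1::real} \<Longrightarrow> E \<inter> {..1} = E" by auto

lemma cut_exists: "E \<in> sets lebesgue \<Longrightarrow> E \<subseteq> {0..1::real} \<Longrightarrow> 0 \<le> t \<Longrightarrow> t \<le> measure lebesgue E \<Longrightarrow>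
   \<exists>s. -1 \<le> s \<and> s \<le> 1 \<and> measure lebesgue (E \<inter> {..s}) = t"
  using IVT'[of "\<lambda>s. measure lebesgue (E \<inter> {..s})" "-1" t 1] cut_cont[of E "{-1..1}"]
  by (simp add: cut_low cut_high)

lemma mun: "A \<in> sets lebesgue \<Longrightarrow> A \<subseteq> {0..1::real} \<Longrightarrow> B \<in> sets lebesgue \<Longrightarrow> B \<subseteq> {0..1} \<Longrightarrow>
  A \<inter> B = {} \<Longrightarrow> measure lebesgue (A \<union> B) = measure lebesgue A + measure lebesgue B"
proof -
  assume a: "A \<in> sets lebesgue" "A \<subseteq> {0..1::real}" "B \<in> sets lebesgue" "B \<subseteq> {0..1}" "A \<inter> B = {}"
  have "B - A = B" using a(5) by blast
  thus ?thesis using measure_Un2[OF fm01[OF a(1,2)] fm01[OF a(3,4)]] by simp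
qed

lemma UL_good: "finite Y \<Longrightarrow> (\<forall>x\<in>Y. L x \<in> sets lebesgue \<and> L x \<subseteq> {0..1::real}) \<Longrightarrow>
   \<Union>(L ` Y) \<in> sets lebesgue \<and> \<Union>(L ` Y) \<subseteq> {0..1}"
  by (auto intro!: sets.finite_UN)

definition hallc :: "'a set \<Rightarrow> ('a \<Rightarrow> real set) \<Rightarrow> ('a \<Rightarrow> real) \<Rightarrow> bool" where
 "hallc X L g \<longleftrightarrow> finite X \<and> (\<forall>x\<in>X. L x \<in> sets lebesgue \<and> L x \<subseteq> {0..1} \<and> 0 \<le> g x) \<and>
    (\<forall>Y\<subseteq>X. sum g Y \<le> measure lebesgue (\<Union>(L ` Y)))"

definition colb :: "'a set \<Rightarrow> ('a \<Rightarrow> real set) \<Rightarrow> ('a \<Rightarrow> real) \<Rightarrow> bool" where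
 "colb X L g \<longleftrightarrow> (\<exists>\<phi>. (\<forall>x\<in>X. \<phi> x \<in> sets lebesgue \<and> \<phi> x \<subseteq> L x \<and> g x \<le> measure lebesgue (\<phi> x)) \<and>
    (\<forall>x\<in>X. \<forall>y\<in>X. x \<noteq> y \<longrightarrow> \<phi> x \<inter> \<phi> y = {}))"

lemma hall_split:
  assumes IH: "\<And>X' L g. X' \<subset> X \<Longrightarrow> hallc X' L g \<Longrightarrow> colb X' L g"
    and H: "hallc X L g" and ne: "Y0 \<noteq> {}" and sub: "Y0 \<subset> X"
    and tight: "measure lebesgue (\<Union>(L ` Y0)) \<le> sum g Y0"
  shows "colb X L g"
proof -
  have fin: "finite X" and good: "\<forall>x\<in>X. L x \<in> sets lebesgue \<and> L x \<subseteq> {0..1} \<and> 0 \<le> g x"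
    and hall: "\<forall>Y\<subseteq>X. sum g Y \<le> measure lebesgue (\<Union>(L ` Y))" using H unfolding hallc_def by blast+
  define Z where "Z = \<Union>(L ` Y0)"
  have finY0: "finite Y0" using sub fin finite_subset by blast
  have "\<forall>x\<in>Y0. L x \<in> sets lebesgue \<and> L x \<subseteq> {0..1}" using good sub by blast
  from UL_good[OF finY0 this] have Zg: "Z \<in> sets lebesgue" "Z \<subseteq> {0..1}" unfolding Z_def by auto
  have "hallc Y0 L g" unfolding hallc_def
  proof (intro conjI ballI allI impI)
    show "finite Y0" by fact
  next
    fix x assume "x \<in> Y0" hence "x \<in> X" using sub by blast
    thus "L x \<in> sets lebesgue" "L x \<subseteq> {0..1}" "0 \<le> g x" using good by blast+
  next
    fix Y assume "Y \<subseteq> Y0" hence "Y \<subseteq> X" using sub by blast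
    thus "sum g Y \<le> measure lebesgue (\<Union>(L ` Y))" using hall by blast
  qed
  from IH[OF sub this, unfolded colb_def] obtain \<phi>1 where p1: "(\<forall>x\<in>Y0. \<phi>1 x \<in> sets lebesgue \<and> \<phi>1 x \<subseteq> L x \<and> g x \<le> measure lebesgue (\<phi>1 x)) \<and>
     (\<forall>x\<in>Y0. \<forall>y\<in>Y0. x \<noteq> y \<longrightarrow> \<phi>1 x \<inter> \<phi>1 y = {})"
    by (rule exE)
  define L2 where "L2 = (\<lambda>x. L x - Z)"
  have "hallc (X - Y0) L2 g"
    unfolding hallc_def
  proof (intro conjI ballI allI impI)
    show "finite (X - Y0)" using fin by simp
  next
    fix x assume "x \<in> X - Y0"
    thus "L2 x \<in> sets lebesgue" "L2 x \<subseteq> {0..1}" "0 \<le> g x" using good Zg unfolding L2_def by auto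
  next
    fix Y assume Y: "Y \<subseteq> X - Y0"
    have finY: "finite Y" using Y fin finite_subset by blast
    have "\<forall>x\<in>Y. L x \<in> sets lebesgue \<and> L x \<subseteq> {0..1}" using good Y by blast
    from UL_good[OF finY this] have UY: "\<Union>(L ` Y) \<in> sets lebesgue" "\<Union>(L ` Y) \<subseteq> {0..1}" by auto
    have eq: "\<Union>(L2 ` Y) = \<Union>(L ` Y) - Z" unfolding L2_def by auto
    have "Z \<union> \<Union>(L ` Y) = \<Union>(L ` (Y \<union> Y0))" unfolding Z_def by auto
    hence "measure lebesgue (\<Union>(L ` (Y \<union> Y0))) = measure lebesgue Z + measure lebesgue (\<Union>(L ` Y) - Z)"
      using measure_Un2[OF fm01[OF Zg] fm01[OF UY]] by simp
    moreover have "sum g (Y \<union> Y0) = sum g Y + sum g Y0"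
      using Y finY finY0 by (intro sum.union_disjoint) auto
    moreover have "Y \<union> Y0 \<subseteq> X" using Y sub by blast
    hence "sum g (Y \<union> Y0) \<le> measure lebesgue (\<Union>(L ` (Y \<union> Y0)))"
      using hall by blast
    ultimately show "sum g Y \<le> measure lebesgue (\<Union>(L2 ` Y))"
      using tight unfolding eq Z_def by linarith
  qed
  moreover have "X - Y0 \<subset> X" using ne sub by blast
  ultimately have "colb (X - Y0) L2 g" using IH by blast
  from this[unfolded colb_def] obtain \<phi>2 where p2: "(\<forall>x\<in>X - Y0. \<phi>2 x \<in> sets lebesgue \<and> \<phi>2 x \<subseteq> L2 x \<and> g x \<le> measure lebesgue (\<phi>2 x)) \<and>
     (\<forall>x\<in>X - Y0. \<forall>y\<in>X - Y0. x \<noteq> y \<longrightarrow> \<phi>2 x \<inter> \<phi>2 y = {})"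
    by (rule exE)
  define \<phi> where "\<phi> = (\<lambda>x. if x \<in> Y0 then \<phi>1 x else \<phi>2 x)"
  show ?thesis unfolding colb_def
  proof (intro exI[of _ \<phi>] conjI ballI impI)
    fix x assume x: "x \<in> X"
    show "\<phi> x \<in> sets lebesgue" "\<phi> x \<subseteq> L x" "g x \<le> measure lebesgue (\<phi> x)"
      using conjunct1[OF p1] conjunct1[OF p2] x unfolding \<phi>_def L2_def by auto
  next
    fix x y assume x: "x \<in> X" and y: "y \<in> X" and xy: "x \<noteq> y"
    have a: "\<phi>1 z \<subseteq> Z" if "z \<in> Y0" for z
    proof -
      have "\<phi>1 z \<subseteq> L z" using conjunct1[OF p1] that by simp
      moreover have "L z \<subseteq> Z" unfolding Z_def using that by (rule UN_upper)
      ultimately show ?thesis by (rule subset_trans)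
    qed
    have b: "\<phi>2 z \<inter> Z = {}" if "z \<in> X - Y0" for z
    proof -
      have "\<phi>2 z \<subseteq> L z - Z" using conjunct1[OF p2] that unfolding L2_def by simp
      thus ?thesis by blast
    qed
    show "\<phi> x \<inter> \<phi> y = {}"
    proof (cases "x \<in> Y0"; cases "y \<in> Y0")
      assume "x \<in> Y0" "y \<in> Y0" thus ?thesis using conjunct2[OF p1] xy unfolding \<phi>_def by simp
    next
      assume "x \<in> Y0" "y \<notin> Y0" thus ?thesis using a[of x] b[of y] y unfolding \<phi>_def by auto
    next
      assume "x \<notin> Y0" "y \<in> Y0" thus ?thesis using a[of y] b[of x] x unfolding \<phi>_def by auto
    next
      assume "x \<notin> Y0" "y \<notin> Y0" thus ?thesis using conjunct2[OF p2] x y xy unfolding \<phi>_def by simp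
    qed
  qed
qed

lemma hall_main:
  assumes "hallc X L g" shows "colb X L g"
proof -
  have "finite X" using assms by (simp add: hallc_def)
  thus ?thesis using assms
  proof (induction X arbitrary: L g rule: finite_psubset_induct)
    case (psubset X)
    have IH: "\<And>X' L g. X' \<subset> X \<Longrightarrow> hallc X' L g \<Longrightarrow> colb X' L g" using psubset.IH by blast
    have fin: "finite X" and good: "\<forall>x\<in>X. L x \<in> sets lebesgue \<and> L x \<subseteq> {0..1} \<and> 0 \<le> g x"
      and hall: "\<forall>Y\<subseteq>X. sum g Y \<le> measure lebesgue (\<Union>(L ` Y))" using psubset.prems unfolding hallc_def by blast+
    show ?case
    proof (cases "X = {}")
      case True thus ?thesis unfolding colb_def by simp
    next
      case False
      then obtain v where v: "v \<in> X" by blast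
      have Lv: "L v \<in> sets lebesgue" "L v \<subseteq> {0..1}" "0 \<le> g v" using good v by blast+
      have "sum g {v} \<le> measure lebesgue (\<Union>(L ` {v}))" using hall v by blast
      hence gv: "g v \<le> measure lebesgue (L v)" by simp
      obtain s1 where s1: "-1 \<le> s1" "s1 \<le> 1" "measure lebesgue (L v \<inter> {..s1}) = g v"
        using cut_exists[OF Lv(1,2) Lv(3) gv] by blast
      define U where "U Y = \<Union>(L ` Y)" for Y
      have Ug: "U Y \<in> sets lebesgue \<and> U Y \<subseteq> {0..1}" if "Y \<subseteq> X" for Y
      proof -
        have "finite Y" using that fin finite_subset by blast
        moreover have "\<forall>x\<in>Y. L x \<in> sets lebesgue \<and> L x \<subseteq> {0..1}" using good that by blast
        ultimately show ?thesis unfolding U_def by (rule UL_good)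
      qed
      have Eg: "L v \<inter> U Y \<in> sets lebesgue" "L v \<inter> U Y \<subseteq> {0..1}" if "Y \<subseteq> X" for Y
        using Ug[OF that] Lv by auto
      define f where "f Y s = measure lebesgue (U Y) - sum g Y - measure lebesgue ((L v \<inter> U Y) \<inter> {..s})" for Y s
      have fmono: "f Y t \<le> f Y s" if "Y \<subseteq> X" "s \<le> t" for Y s t
        using cut_mono[OF Eg[OF that(1)] that(2)] unfolding f_def by simp
      have diffeq: "measure lebesgue (\<Union>((\<lambda>x. L x - L v \<inter> {..s}) ` Y)) = measure lebesgue (U Y) - measure lebesgue ((L v \<inter> U Y) \<inter> {..s})"
        if "Y \<subseteq> X" for Y s
      proof -
        have "\<Union>((\<lambda>x. L x - L v \<inter> {..s}) ` Y) = U Y - L v \<inter> {..s}" unfolding U_def by blast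
        moreover have "U Y \<inter> (L v \<inter> {..s}) = (L v \<inter> U Y) \<inter> {..s}" by blast
        moreover have "L v \<inter> {..s} \<in> sets lebesgue" using Lv by auto
        ultimately show ?thesis using mdiff[OF fm01[OF conjunct1[OF Ug[OF that]] conjunct2[OF Ug[OF that]]]] by simp
      qed
      have hallU: "sum g Y \<le> measure lebesgue (U Y)" if "Y \<subseteq> X" for Y using hall that unfolding U_def by blast
      define Bad where "Bad = {Y. Y \<subseteq> X - {v} \<and> Y \<noteq> {} \<and> f Y s1 < 0}"
      show ?thesis
      proof (cases "Bad = {}")
        case True
        define \<Phi> where "\<Phi> = L v \<inter> {..s1}"
        define L' where "L' x = L x - \<Phi>" for x
        have \<Phi>m: "\<Phi> \<in> sets lebesgue" using Lv unfolding \<Phi>_def by auto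
        have "hallc (X - {v}) L' g" unfolding hallc_def
        proof (intro conjI ballI allI impI)
          show "finite (X - {v})" using fin by simp
        next
          fix x assume "x \<in> X - {v}"
          thus "L' x \<in> sets lebesgue" "L' x \<subseteq> {0..1}" "0 \<le> g x" using good \<Phi>m unfolding L'_def by auto
        next
          fix Y assume Y: "Y \<subseteq> X - {v}"
          hence YX: "Y \<subseteq> X" by blast
          show "sum g Y \<le> measure lebesgue (\<Union>(L' ` Y))"
          proof (cases "Y = {}")
            case True thus ?thesis by simp
          next
            case False
            hence "Y \<notin> Bad" using True by blast
            hence "0 \<le> f Y s1" using Y False unfolding Bad_def by auto
            thus ?thesis using diffeq[OF YX, of s1] unfolding f_def L'_def \<Phi>_def by simp
          qed
        qed
        moreover have "X - {v} \<subset> X" using v by blast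
        ultimately have "colb (X - {v}) L' g" using IH by blast
        from this[unfolded colb_def] obtain \<phi> where p: "(\<forall>x\<in>X - {v}. \<phi> x \<in> sets lebesgue \<and> \<phi> x \<subseteq> L' x \<and> g x \<le> measure lebesgue (\<phi> x)) \<and>
           (\<forall>x\<in>X - {v}. \<forall>y\<in>X - {v}. x \<noteq> y \<longrightarrow> \<phi> x \<inter> \<phi> y = {})"
          by (rule exE)
        show ?thesis unfolding colb_def
        proof (intro exI[of _ "\<phi>(v := \<Phi>)"] conjI ballI impI)
          fix x assume x: "x \<in> X"
          show "(\<phi>(v := \<Phi>)) x \<in> sets lebesgue" "(\<phi>(v := \<Phi>)) x \<subseteq> L x" "g x \<le> measure lebesgue ((\<phi>(v := \<Phi>)) x)"
          proof -
            show "(\<phi>(v := \<Phi>)) x \<in> sets lebesgue" using conjunct1[OF p] x \<Phi>m by auto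
            show "(\<phi>(v := \<Phi>)) x \<subseteq> L x" using conjunct1[OF p] x unfolding \<Phi>_def L'_def by auto
            show "g x \<le> measure lebesgue ((\<phi>(v := \<Phi>)) x)" using conjunct1[OF p] x s1(3) unfolding \<Phi>_def by auto
          qed
        next
          fix x y assume x: "x \<in> X" and y: "y \<in> X" and xy: "x \<noteq> y"
          have d: "\<phi> z \<inter> \<Phi> = {}" if "z \<in> X - {v}" for z
          proof -
            have "\<phi> z \<subseteq> L z - \<Phi>" using conjunct1[OF p] that unfolding L'_def by simp
            thus ?thesis by blast
          qed
          show "(\<phi>(v := \<Phi>)) x \<inter> (\<phi>(v := \<Phi>)) y = {}"
          proof (cases "x = v"; cases "y = v")
            assume "x = v" "y = v" thus ?thesis using xy by simp
          next
            assume "x = v" "y \<noteq> v" thus ?thesis using d[of y] y by auto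
          next
            assume "x \<noteq> v" "y = v" thus ?thesis using d[of x] x by auto
          next
            assume "x \<noteq> v" "y \<noteq> v" thus ?thesis using conjunct2[OF p] x y xy by simp
          qed
        qed
      next
        case False
        have ex: "\<exists>s. -1 \<le> s \<and> s \<le> s1 \<and> f Y s = 0" if Y: "Y \<in> Bad" for Y
        proof -
          have YX: "Y \<subseteq> X" using Y unfolding Bad_def by blast
          have neg: "f Y s1 \<le> 0" using Y unfolding Bad_def by simp
          have "L v \<inter> U Y \<inter> {..-1} = {}" using Lv(2) by auto
          hence pos: "0 \<le> f Y (-1)" using hallU[OF YX] unfolding f_def by simp
          have cont: "continuous_on {-1..s1} (f Y)" unfolding f_def
            by (intro continuous_on_diff continuous_on_const cut_cont[OF Eg[OF YX]])
          show ?thesis using IVT2'[of "f Y" s1 0 "-1", OF neg pos s1(1) cont] by blast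
        qed
        then obtain sY where sY: "\<And>Y. Y \<in> Bad \<Longrightarrow> -1 \<le> sY Y \<and> sY Y \<le> s1 \<and> f Y (sY Y) = 0" by metis
        have "Bad \<subseteq> Pow X" unfolding Bad_def by blast
        hence finB: "finite Bad" using fin by (meson finite_Pow_iff finite_subset)
        define ss where "ss = Min (sY ` Bad)"
        have "ss \<in> sY ` Bad" unfolding ss_def using finB False by (intro Min_in) auto
        then obtain Y0 where Y0: "Y0 \<in> Bad" "sY Y0 = ss" by blast
        have ssle: "ss \<le> sY Y" if "Y \<in> Bad" for Y unfolding ss_def using finB that by (intro Min_le) auto
        have sss1: "ss \<le> s1" using sY[OF Y0(1)] Y0(2) by simp
        define \<Phi> where "\<Phi> = L v \<inter> {..ss}"
        have \<Phi>g: "\<Phi> \<in> sets lebesgue" "\<Phi> \<subseteq> {0..1}" "\<Phi> \<subseteq> L v" using Lv unfolding \<Phi>_def by auto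
        have m\<Phi>: "measure lebesgue \<Phi> \<le> g v" using cut_mono[OF Lv(1,2) sss1] s1(3) unfolding \<Phi>_def by simp
        define L'' where "L'' x = L x - \<Phi>" for x
        define g'' where "g'' = g(v := g v - measure lebesgue \<Phi>)"
        have ULeq: "\<Union>(L'' ` Y) = U Y - \<Phi>" for Y unfolding L''_def U_def by blast
        have H2: "hallc X L'' g''" unfolding hallc_def
        proof (intro conjI ballI allI impI)
          show "finite X" by fact
        next
          fix x assume "x \<in> X"
          thus "L'' x \<in> sets lebesgue" "L'' x \<subseteq> {0..1}" "0 \<le> g'' x" using good \<Phi>g m\<Phi> unfolding L''_def g''_def by auto
        next
          fix Y assume YX: "Y \<subseteq> X"
          show "sum g'' Y \<le> measure lebesgue (\<Union>(L'' ` Y))"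
          proof (cases "v \<in> Y")
            case True
            have finY: "finite Y" using YX fin finite_subset by blast
            have "sum g'' Y = g'' v + sum g'' (Y - {v})" using finY True by (rule sum.remove)
            also have "sum g'' (Y - {v}) = sum g (Y - {v})" unfolding g''_def by (intro sum.cong) auto
            finally have s1': "sum g'' Y = g'' v + sum g (Y - {v})" .
            have "g v + sum g (Y - {v}) = sum g Y" using finY True by (rule sum.remove[symmetric])
            hence s: "sum g'' Y = sum g Y - measure lebesgue \<Phi>" using s1' unfolding g''_def by simp
            have "\<Phi> \<subseteq> U Y" using \<Phi>g(3) True unfolding U_def by blast
            hence "U Y \<inter> \<Phi> = \<Phi>" by blast
            hence "measure lebesgue (U Y - \<Phi>) = measure lebesgue (U Y) - measure lebesgue \<Phi>"
              using mdiff[OF fm01[OF conjunct1[OF Ug[OF YX]] conjunct2[OF Ug[OF YX]]] \<Phi>g(1)] by simp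
            thus ?thesis using s hallU[OF YX] unfolding ULeq by simp
          next
            case False
            have s: "sum g'' Y = sum g Y" unfolding g''_def using False by (intro sum.cong) auto
            show ?thesis
            proof (cases "Y = {}")
              case True thus ?thesis by simp
            next
              case ne: False
              have Y': "Y \<subseteq> X - {v}" using YX False by blast
              have "0 \<le> f Y ss"
              proof (cases "Y \<in> Bad")
                case True
                thus ?thesis using fmono[OF YX ssle[OF True]] sY[OF True] by simp
              next
                case nb: False
                hence "0 \<le> f Y s1" using Y' ne unfolding Bad_def by auto
                thus ?thesis using fmono[OF YX sss1] by simp
              qed
              moreover have "\<Union>(L'' ` Y) = \<Union>((\<lambda>x. L x - L v \<inter> {..ss}) ` Y)" unfolding L''_def \<Phi>_def ..
              ultimately show ?thesis using s diffeq[OF YX, of ss] unfolding f_def by simp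
            qed
          qed
        qed
        have Y0X: "Y0 \<subseteq> X - {v}" "Y0 \<noteq> {}" using Y0(1) unfolding Bad_def by auto
        hence Y0s: "Y0 \<subset> X" using v by blast
        have "sum g'' Y0 = sum g Y0" unfolding g''_def using Y0X by (intro sum.cong) auto
        moreover have "\<Union>(L'' ` Y0) = \<Union>((\<lambda>x. L x - L v \<inter> {..ss}) ` Y0)" unfolding L''_def \<Phi>_def ..
        moreover have "f Y0 ss = 0" using sY[OF Y0(1)] Y0(2) by simp
        moreover have "Y0 \<subseteq> X" using Y0X by blast
        ultimately have tight: "measure lebesgue (\<Union>(L'' ` Y0)) \<le> sum g'' Y0"
          using diffeq[of Y0 ss] unfolding f_def by simp
        have "colb X L'' g''" by (rule hall_split[OF IH H2 Y0X(2) Y0s tight])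
        from this[unfolded colb_def] obtain \<phi> where p: "(\<forall>x\<in>X. \<phi> x \<in> sets lebesgue \<and> \<phi> x \<subseteq> L'' x \<and> g'' x \<le> measure lebesgue (\<phi> x)) \<and>
           (\<forall>x\<in>X. \<forall>y\<in>X. x \<noteq> y \<longrightarrow> \<phi> x \<inter> \<phi> y = {})"
          by (rule exE)
        have d: "\<phi> z \<inter> \<Phi> = {}" if "z \<in> X" for z
        proof -
          have "\<phi> z \<subseteq> L z - \<Phi>" using conjunct1[OF p] that unfolding L''_def by simp
          thus ?thesis by blast
        qed
        show ?thesis unfolding colb_def
        proof (intro exI[of _ "\<phi>(v := \<phi> v \<union> \<Phi>)"] conjI ballI impI)
          fix x assume x: "x \<in> X"
          have pv: "\<phi> v \<in> sets lebesgue" "\<phi> v \<subseteq> L v - \<Phi>" "g v - measure lebesgue \<Phi> \<le> measure lebesgue (\<phi> v)"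
            using conjunct1[OF p] v unfolding L''_def g''_def by auto
          show "(\<phi>(v := \<phi> v \<union> \<Phi>)) x \<in> sets lebesgue" using conjunct1[OF p] x \<Phi>g by auto
          show "(\<phi>(v := \<phi> v \<union> \<Phi>)) x \<subseteq> L x" using conjunct1[OF p] x \<Phi>g unfolding L''_def by auto
          show "g x \<le> measure lebesgue ((\<phi>(v := \<phi> v \<union> \<Phi>)) x)"
          proof (cases "x = v")
            case True
            have "measure lebesgue (\<phi> v \<union> \<Phi>) = measure lebesgue (\<phi> v) + measure lebesgue \<Phi>"
              using pv Lv \<Phi>g by (intro mun) auto
            thus ?thesis using True pv by simp
          next
            case False thus ?thesis using conjunct1[OF p] x unfolding g''_def by auto
          qed
        next
          fix x y assume x: "x \<in> X" and y: "y \<in> X" and xy: "x \<noteq> y"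
          show "(\<phi>(v := \<phi> v \<union> \<Phi>)) x \<inter> (\<phi>(v := \<phi> v \<union> \<Phi>)) y = {}"
          proof (cases "x = v"; cases "y = v")
            assume "x = v" "y = v" thus ?thesis using xy by simp
          next
            assume "x = v" "y \<noteq> v" thus ?thesis using d[OF y] conjunct2[OF p] x y xy by auto
          next
            assume "x \<noteq> v" "y = v" thus ?thesis using d[OF x] conjunct2[OF p] x y xy by auto
          next
            assume "x \<noteq> v" "y \<noteq> v" thus ?thesis using conjunct2[OF p] x y xy by simp
          qed
        qed
      qed
    qed
  qed
qed

lemma mono_good: "A \<subseteq> B \<Longrightarrow> A \<in> sets lebesgue \<Longrightarrow> B \<in> sets lebesgue \<Longrightarrow> B \<subseteq> {0..1::real} \<Longrightarrow>
  measure lebesgue A \<le> measure lebesgue B"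
proof -
  assume a: "A \<subseteq> B" "A \<in> sets lebesgue" "B \<in> sets lebesgue" "B \<subseteq> {0..1::real}"
  show ?thesis using measure_mono_fmeasurable[OF a(1,2) fm01[OF a(3,4)]] .
qed

lemma diff_ge: "A \<in> sets lebesgue \<Longrightarrow> A \<subseteq> {0..1::real} \<Longrightarrow> B \<in> sets lebesgue \<Longrightarrow> B \<subseteq> {0..1} \<Longrightarrow>
  measure lebesgue A - measure lebesgue B \<le> measure lebesgue (A - B)"
proof -
  assume a: "A \<in> sets lebesgue" "A \<subseteq> {0..1::real}" "B \<in> sets lebesgue" "B \<subseteq> {0..1}"
  have "measure lebesgue (A \<inter> B) \<le> measure lebesgue B" using a by (intro mono_good) auto
  thus ?thesis using mdiff[OF fm01[OF a(1,2)] a(3)] by simp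
qed

lemma P_exists:
  fixes M :: "'a set set" and I :: "'a set \<Rightarrow> real set" and b :: "'a set \<Rightarrow> real"
  assumes "finite M" "\<forall>e\<in>M. I e \<in> sets lebesgue \<and> I e \<subseteq> {0..1} \<and> 0 \<le> b e"
  shows "\<exists>P. (\<forall>e\<in>M. P e \<in> sets lebesgue \<and> P e \<subseteq> I e \<and> measure lebesgue (P e) \<le> b e \<and>
           (measure lebesgue (P e) = b e \<or> measure lebesgue (I e) \<le> measure lebesgue (\<Union>(P ` M)))) \<and>
         (\<forall>e\<in>M. \<forall>e'\<in>M. e \<noteq> e' \<longrightarrow> P e \<inter> P e' = {})"
  using assms
proof (induction M rule: finite_induct)
  case empty thus ?case by simp
next
  case (insert e M)
  have "\<forall>e\<in>M. I e \<in> sets lebesgue \<and> I e \<subseteq> {0..1} \<and> 0 \<le> b e" using insert.prems by simp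
  from insert.IH[OF this] obtain P where
    P12: "(\<forall>e\<in>M. P e \<in> sets lebesgue \<and> P e \<subseteq> I e \<and> measure lebesgue (P e) \<le> b e \<and>
           (measure lebesgue (P e) = b e \<or> measure lebesgue (I e) \<le> measure lebesgue (\<Union>(P ` M)))) \<and>
    (\<forall>e\<in>M. \<forall>e'\<in>M. e \<noteq> e' \<longrightarrow> P e \<inter> P e' = {})" by (rule exE)
  note P1 = conjunct1[OF P12] and P2 = conjunct2[OF P12]
  define Q where "Q = \<Union>(P ` M)"
  have "\<forall>x\<in>M. P x \<in> sets lebesgue \<and> P x \<subseteq> {0..1}"
  proof (intro ballI conjI)
    fix x assume x: "x \<in> M"
    show "P x \<in> sets lebesgue" using P1 x by blast
    have "P x \<subseteq> I x" using P1 x by blast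
    moreover have "I x \<subseteq> {0..1}" using insert.prems x by blast
    ultimately show "P x \<subseteq> {0..1}" by (rule subset_trans)
  qed
  from UL_good[OF insert.hyps(1) this] have Qg: "Q \<in> sets lebesgue" "Q \<subseteq> {0..1}" unfolding Q_def by auto
  have Ie: "I e \<in> sets lebesgue" "I e \<subseteq> {0..1}" "0 \<le> b e" using insert.prems by auto
  define E where "E = I e - Q"
  have Eg: "E \<in> sets lebesgue" "E \<subseteq> {0..1}" using Ie Qg unfolding E_def by auto
  obtain Pe where Pe: "Pe \<in> sets lebesgue" "Pe \<subseteq> E" "measure lebesgue Pe \<le> b e"
     "measure lebesgue Pe = b e \<or> Pe = E"
  proof (cases "measure lebesgue E \<le> b e")
    case True thus ?thesis using that[of E] Eg by auto
  next
    case False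
    then obtain t where h1: "measure lebesgue (E \<inter> {..t}) = b e" using cut_exists[OF Eg Ie(3)] by force
    have h2: "E \<inter> {..t} \<in> sets lebesgue" using fmcut[OF Eg] by (rule fmeasurableD)
    show ?thesis
    proof (rule that[of "E \<inter> {..t}"])
      show "E \<inter> {..t} \<in> sets lebesgue" by (rule h2)
      show "E \<inter> {..t} \<subseteq> E" by blast
      show "measure lebesgue (E \<inter> {..t}) \<le> b e" using h1 by simp
      show "measure lebesgue (E \<inter> {..t}) = b e \<or> E \<inter> {..t} = E" using h1 by simp
    qed
  qed
  define P' where "P' = P(e := Pe)"
  have UP: "\<Union>(P' ` insert e M) = Pe \<union> Q" unfolding P'_def Q_def using insert.hyps(2) by auto
  have UPg: "Pe \<union> Q \<in> sets lebesgue" "Pe \<union> Q \<subseteq> {0..1}" using Pe Eg Qg by auto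
  show ?case
  proof (intro exI[of _ P'] conjI ballI impI)
    fix x assume x: "x \<in> insert e M"
    show "P' x \<in> sets lebesgue" "P' x \<subseteq> I x" "measure lebesgue (P' x) \<le> b x"
      using x P1 Pe unfolding P'_def E_def by auto
    show "measure lebesgue (P' x) = b x \<or> measure lebesgue (I x) \<le> measure lebesgue (\<Union>(P' ` insert e M))"
    proof (cases "x = e")
      case True
      show ?thesis
      proof (cases "Pe = E")
        case True
        have "I e \<subseteq> Pe \<union> Q" using True unfolding E_def by blast
        hence "measure lebesgue (I e) \<le> measure lebesgue (Pe \<union> Q)" using Ie UPg by (intro mono_good) auto
        thus ?thesis using \<open>x = e\<close> UP by simp
      next
        case False thus ?thesis using Pe(4) True unfolding P'_def by simp
      qed
    next
      case False
      hence xM: "x \<in> M" using x by simp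
      have "measure lebesgue Q \<le> measure lebesgue (Pe \<union> Q)" using Qg UPg by (intro mono_good) auto
      thus ?thesis using P1 xM False UP unfolding P'_def Q_def by auto
    qed
  next
    fix x y assume x: "x \<in> insert e M" and y: "y \<in> insert e M" and xy: "x \<noteq> y"
    have d: "Pe \<inter> P z = {}" if "z \<in> M" for z using Pe(2) that unfolding E_def Q_def by blast
    show "P' x \<inter> P' y = {}"
    proof (cases "x = e"; cases "y = e")
      assume "x = e" "y = e" thus ?thesis using xy by simp
    next
      assume "x = e" "y \<noteq> e" thus ?thesis using d[of y] y unfolding P'_def by simp
    next
      assume "x \<noteq> e" "y = e" thus ?thesis using d[of x] x unfolding P'_def by (simp add: Int_commute)
    next
      assume "x \<noteq> e" "y \<noteq> e" thus ?thesis using P2 x y xy unfolding P'_def by simp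
    qed
  qed
qed



lemma decomp:
  fixes h :: "'a \<Rightarrow> real"
  assumes "finite V" "M \<subseteq> Pow V" "\<forall>e\<in>M. \<forall>e'\<in>M. e \<noteq> e' \<longrightarrow> e \<inter> e' = {}" "Y \<subseteq> V"
  shows "sum h Y = sum h (Y - \<Union>M) + (\<Sum>e\<in>M. sum h (Y \<inter> e))"
proof -
  have finM: "finite M" using assms(1,2) by (meson finite_Pow_iff finite_subset)
  have finY: "finite Y" using assms(1,4) finite_subset by blast
  have "sum h Y = sum h (Y \<inter> \<Union>M) + sum h (Y - \<Union>M)" using finY by (rule sum.Int_Diff)
  moreover have eq: "Y \<inter> \<Union>M = (\<Union>e\<in>M. Y \<inter> e)" by blast
  have "sum h (Y \<inter> \<Union>M) = (\<Sum>e\<in>M. sum h (Y \<inter> e))"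
    unfolding eq
  proof (rule sum.UNION_disjoint)
    show "finite M" by fact
    show "\<forall>e\<in>M. finite (Y \<inter> e)" using finY by blast
    show "\<forall>e\<in>M. \<forall>e'\<in>M. e \<noteq> e' \<longrightarrow> Y \<inter> e \<inter> (Y \<inter> e') = {}" using assms(3) by blast
  qed
  ultimately show ?thesis by linarith
qed

lemma pairsum:
  fixes h :: "'a \<Rightarrow> real"
  assumes "u \<noteq> v"
  shows "sum h (Y \<inter> {u, v}) = (if u \<in> Y then h u else 0) + (if v \<in> Y then h v else 0)"
  using assms by (cases "u \<in> Y"; cases "v \<in> Y") (simp_all add: Int_insert_right)

lemma pair_ne: "{x, y} \<in> complete_edges V \<Longrightarrow> x \<noteq> y"
  unfolding complete_edges_def by (auto simp: doubleton_eq_iff)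

lemma pair_info: "I = \<Inter>(L ` {u, v}) \<Longrightarrow> I = L u \<inter> L v"
  by simp

lemma dbl: "x \<in> {u, v} \<Longrightarrow> y \<in> {u, v} \<Longrightarrow> x \<noteq> y \<Longrightarrow> {x, y} = {u, v}"
  by auto

lemma un4: "A \<inter> C = {} \<Longrightarrow> A \<inter> D = {} \<Longrightarrow> B \<inter> C = {} \<Longrightarrow> B \<inter> D = {} \<Longrightarrow> (A \<union> B) \<inter> (C \<union> D) = {}"
  by blast

lemma pair_max: "Max (g ` {u, v}) = max (g u) (g v :: real)" by simp
lemma pair_min: "Min (g ` {u, v}) = min (g u) (g v :: real)" by simp

theorem lemma2p11:
  fixes V :: "'a set" and M :: "'a set set" and g :: "'a \<Rightarrow> real" and L :: "'a \<Rightarrow> real set"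
  assumes "finite V"
    and "is_matching V M"
    and "demand_function V g"
    and "frac_list_assignment V L"
    and "\<forall>v\<in>V - \<Union>M. measure lebesgue (L v) \<ge>
           (\<Sum>u\<in>V - \<Union>M. g u) + (\<Sum>e\<in>M. Max (g ` e))"
    and "\<forall>v\<in>\<Union>M. measure lebesgue (L v) \<ge>
           g v + (\<Sum>e\<in>{e\<in>M. v \<notin> e}. Max (g ` e))"
    and "\<forall>u v. {u, v} \<in> M \<longrightarrow> measure lebesgue (L u) + measure lebesgue (L v) \<ge> (\<Sum>w\<in>V. g w)"
  shows "\<exists>\<phi>. frac_coloring V (complete_edges V - M) g L \<phi>"
proof -
  note fin = assms(1)
  have Lg: "L x \<in> sets lebesgue" "L x \<subseteq> {0..1}" if "x \<in> V" for x
    using assms(4) that unfolding frac_list_assignment_def by blast+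
  have gnn: "0 \<le> g x" if "x \<in> V" for x using assms(3) that unfolding demand_function_def by blast
  have Msub: "M \<subseteq> complete_edges V" and Mdisj: "\<forall>e\<in>M. \<forall>e'\<in>M. e \<noteq> e' \<longrightarrow> e \<inter> e' = {}"
    using assms(2) unfolding is_matching_def by blast+
  have edge: "\<exists>u v. e = {u, v} \<and> u \<noteq> v \<and> u \<in> V \<and> v \<in> V" if "e \<in> M" for e
    using Msub that unfolding complete_edges_def by blast
  have MPow: "M \<subseteq> Pow V" using edge by blast
  have finM: "finite M" using fin MPow by (meson finite_Pow_iff finite_subset)
  have uniq: "e = e'" if "e \<in> M" "e' \<in> M" "x \<in> e" "x \<in> e'" for x e e' using Mdisj that by blast
  define I where "I e = \<Inter>(L ` e)" for e
  define a where "a e = Max (g ` e)" for e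
  define b where "b e = Min (g ` e)" for e
  have pair: "I e = L u \<inter> L v" "a e = max (g u) (g v)" "b e = min (g u) (g v)" if "e = {u, v}" for e u v
    unfolding I_def a_def b_def that by simp_all
  have Igood: "\<forall>e\<in>M. I e \<in> sets lebesgue \<and> I e \<subseteq> {0..1} \<and> 0 \<le> b e"
  proof
    fix e assume e: "e \<in> M"
    then obtain u v where uv: "e = {u, v}" "u \<noteq> v" "u \<in> V" "v \<in> V" using edge by blast
    show "I e \<in> sets lebesgue \<and> I e \<subseteq> {0..1} \<and> 0 \<le> b e"
      using pair[OF uv(1)] Lg[OF uv(3)] Lg[OF uv(4)] gnn[OF uv(3)] gnn[OF uv(4)] by auto
  qed
  from P_exists[OF finM Igood] obtain P where P12:
    "(\<forall>e\<in>M. P e \<in> sets lebesgue \<and> P e \<subseteq> I e \<and> measure lebesgue (P e) \<le> b e \<and>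
           (measure lebesgue (P e) = b e \<or> measure lebesgue (I e) \<le> measure lebesgue (\<Union>(P ` M)))) \<and>
         (\<forall>e\<in>M. \<forall>e'\<in>M. e \<noteq> e' \<longrightarrow> P e \<inter> P e' = {})" by (rule exE)
  note P1 = conjunct1[OF P12] and P2 = conjunct2[OF P12]
  define PP where "PP = \<Union>(P ` M)"
  define s where "s e = measure lebesgue (P e)" for e
  have Pg: "P e \<in> sets lebesgue" "P e \<subseteq> I e" "P e \<subseteq> {0..1}" if "e \<in> M" for e
  proof -
    show "P e \<in> sets lebesgue" "P e \<subseteq> I e" using P1 that by blast+
    moreover have "I e \<subseteq> {0..1}" using Igood that by blast
    ultimately show "P e \<subseteq> {0..1}" by blast
  qed
  have sb: "0 \<le> s e" "s e \<le> b e" if "e \<in> M" for e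
    using P1 that unfolding s_def by auto
  have bad: "measure lebesgue (I e) \<le> measure lebesgue PP" if "e \<in> M" "s e \<noteq> b e" for e
    using P1 that unfolding s_def PP_def by auto
  have "\<forall>e\<in>M. P e \<in> sets lebesgue \<and> P e \<subseteq> {0..1}" using Pg by blast
  from UL_good[OF finM this] have PPg: "PP \<in> sets lebesgue" "PP \<subseteq> {0..1}" unfolding PP_def by auto
  have PPle: "measure lebesgue PP \<le> sum s M" unfolding PP_def s_def
    using Pg(1) by (intro measure_UNION_le[OF finM]) auto
  define sx where "sx x = sum s {e\<in>M. x \<in> e}" for x
  have sx_e: "sx x = s e" if "e \<in> M" "x \<in> e" for x e
  proof -
    have "{e\<in>M. x \<in> e} = {e}" using that uniq by blast
    thus ?thesis unfolding sx_def by simp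
  qed
  have sx_0: "sx x = 0" if "x \<notin> \<Union>M" for x
  proof -
    have E: "{e\<in>M. x \<in> e} = {}" using that by blast
    show ?thesis unfolding sx_def E by simp
  qed
  define g' where "g' x = g x - sx x" for x
  define L' where "L' x = L x - PP" for x
  have g'nn: "0 \<le> g' x" if "x \<in> V" for x
  proof (cases "x \<in> \<Union>M")
    case True
    then obtain e where e: "e \<in> M" "x \<in> e" by blast
    then obtain u v where uv: "e = {u, v}" "u \<noteq> v" "u \<in> V" "v \<in> V" using edge by blast
    have "s e \<le> min (g u) (g v)" using sb(2)[OF e(1)] pair(3)[OF uv(1)] by simp
    moreover have "x = u \<or> x = v" using e(2) uv(1) by blast
    ultimately show ?thesis unfolding g'_def using sx_e[OF e] by auto
  next
    case False thus ?thesis unfolding g'_def using sx_0 gnn[OF that] by simp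
  qed
  have L'g: "L' x \<in> sets lebesgue" "L' x \<subseteq> {0..1}" if "x \<in> V" for x
    unfolding L'_def using Lg[OF that] PPg by auto
  have L'ge: "measure lebesgue (L x) - measure lebesgue PP \<le> measure lebesgue (L' x)" if "x \<in> V" for x
    unfolding L'_def using diff_ge[OF Lg[OF that] PPg] .
  have UL'g: "\<Union>(L' ` Y) \<in> sets lebesgue \<and> \<Union>(L' ` Y) \<subseteq> {0..1}" if "Y \<subseteq> V" for Y
  proof -
    have "finite Y" using that fin finite_subset by blast
    moreover have "\<forall>x\<in>Y. L' x \<in> sets lebesgue \<and> L' x \<subseteq> {0..1}" using L'g that by blast
    ultimately show ?thesis by (rule UL_good)
  qed
  have sum_g'_e: "sum g' e = sum g e - 2 * s e" if eM: "e \<in> M" for e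
  proof -
    obtain u v where uv: "e = {u, v}" "u \<noteq> v" "u \<in> V" "v \<in> V" using edge[OF eM] by blast
    have "g' u = g u - s e" "g' v = g v - s e" unfolding g'_def using sx_e[OF eM] uv(1) by auto
    thus ?thesis using uv(1,2) by simp
  qed
  have sumV: "sum g' V = sum g V - 2 * sum s M"
  proof -
    have VM: "V \<inter> e = e" if "e \<in> M" for e using MPow that by blast
    have "sum g' V = sum g' (V - \<Union>M) + (\<Sum>e\<in>M. sum g' (V \<inter> e))"
      by (rule decomp[OF fin MPow Mdisj order_refl])
    also have "sum g' (V - \<Union>M) = sum g (V - \<Union>M)" unfolding g'_def using sx_0 by (intro sum.cong) auto
    also have "(\<Sum>e\<in>M. sum g' (V \<inter> e)) = (\<Sum>e\<in>M. sum g e - 2 * s e)"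
      using VM sum_g'_e by (intro sum.cong) auto
    also have "\<dots> = (\<Sum>e\<in>M. sum g e) - 2 * sum s M" by (simp add: sum_subtractf sum_distrib_left)
    finally have "sum g' V = sum g (V - \<Union>M) + (\<Sum>e\<in>M. sum g e) - 2 * sum s M" by simp
    moreover have "sum g V = sum g (V - \<Union>M) + (\<Sum>e\<in>M. sum g (V \<inter> e))"
      by (rule decomp[OF fin MPow Mdisj order_refl])
    moreover have "(\<Sum>e\<in>M. sum g (V \<inter> e)) = (\<Sum>e\<in>M. sum g e)" using VM by (intro sum.cong) auto
    ultimately show ?thesis by simp
  qed
  have H: "hallc V L' g'" unfolding hallc_def
  proof (intro conjI ballI allI impI)
    show "finite V" by fact
  next
    fix x assume "x \<in> V"
    thus "L' x \<in> sets lebesgue" "L' x \<subseteq> {0..1}" "0 \<le> g' x" using L'g g'nn by blast+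
  next
    fix Y assume Y: "Y \<subseteq> V"
    define D where "D e = sum g' (Y \<inter> e)" for e
    have finY: "finite Y" using Y fin finite_subset by blast
    have dec: "sum g' Y = sum g (Y - \<Union>M) + sum D M"
    proof -
      have "sum g' Y = sum g' (Y - \<Union>M) + sum D M" unfolding D_def by (rule decomp[OF fin MPow Mdisj Y])
      moreover have "sum g' (Y - \<Union>M) = sum g (Y - \<Union>M)" unfolding g'_def using sx_0 by (intro sum.cong) auto
      ultimately show ?thesis by simp
    qed
    have UY: "\<Union>(L' ` Y) \<in> sets lebesgue" "\<Union>(L' ` Y) \<subseteq> {0..1}" using UL'g[OF Y] by blast+
    have inY: "measure lebesgue A \<le> measure lebesgue (\<Union>(L' ` Y))" if "A \<subseteq> \<Union>(L' ` Y)" "A \<in> sets lebesgue" for A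
      using mono_good[OF that UY] .
    have atx: "measure lebesgue (L x) - measure lebesgue PP \<le> measure lebesgue (\<Union>(L' ` Y))" if "x \<in> Y" for x
    proof -
      have "L' x \<subseteq> \<Union>(L' ` Y)" using that by blast
      hence "measure lebesgue (L' x) \<le> measure lebesgue (\<Union>(L' ` Y))" using inY L'g that Y by blast
      thus ?thesis using L'ge[of x] that Y by auto
    qed
    show "sum g' Y \<le> measure lebesgue (\<Union>(L' ` Y))"
    proof (cases "\<exists>e\<in>M. e \<subseteq> Y \<and> s e \<noteq> b e")
      case True
      then obtain e where e: "e \<in> M" "e \<subseteq> Y" "s e \<noteq> b e" by blast
      obtain u v where uv: "e = {u, v}" "u \<noteq> v" "u \<in> V" "v \<in> V" using edge[OF e(1)] by blast
      have uvY: "u \<in> Y" "v \<in> Y" using e(2) uv(1) by auto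
      have Lu: "L u \<in> fmeasurable lebesgue" using fm01[OF Lg[OF uv(3)]] .
      have Lv: "L v \<in> fmeasurable lebesgue" using fm01[OF Lg[OF uv(4)]] .
      have Un: "measure lebesgue (L u \<union> L v) = measure lebesgue (L u) + measure lebesgue (L v) - measure lebesgue (L u \<inter> L v)"
        using measure_Un3[OF Lu Lv] .
      have Ie: "measure lebesgue (L u \<inter> L v) \<le> measure lebesgue PP" using bad[OF e(1,3)] pair(1)[OF uv(1)] by simp
      have Ung: "L u \<union> L v \<in> sets lebesgue" "L u \<union> L v \<subseteq> {0..1}" using Lg[OF uv(3)] Lg[OF uv(4)] by auto
      have d1: "measure lebesgue (L u \<union> L v) - measure lebesgue PP \<le> measure lebesgue ((L u \<union> L v) - PP)"
        using diff_ge[OF Ung PPg] .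
      have "(L u \<union> L v) - PP \<subseteq> \<Union>(L' ` Y)" unfolding L'_def using uvY by blast
      moreover have "(L u \<union> L v) - PP \<in> sets lebesgue" using Ung PPg by auto
      ultimately have d2: "measure lebesgue ((L u \<union> L v) - PP) \<le> measure lebesgue (\<Union>(L' ` Y))" by (rule inY)
      have iii: "sum g V \<le> measure lebesgue (L u) + measure lebesgue (L v)" using assms(7) e(1) uv(1) by blast
      have "sum g' Y \<le> sum g' V" using fin Y g'nn by (intro sum_mono2) auto
      thus ?thesis using sumV PPle Un Ie d1 d2 iii by linarith
    next
      case False
      have Db: "D e \<le> a e - s e" if eM: "e \<in> M" for e
      proof -
        obtain u v where uv: "e = {u, v}" "u \<noteq> v" "u \<in> V" "v \<in> V" using edge[OF eM] by blast
        have gu: "g' u = g u - s e" "g' v = g v - s e" unfolding g'_def using sx_e[OF eM] uv(1) by auto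
        have De: "D e = (if u \<in> Y then g' u else 0) + (if v \<in> Y then g' v else 0)"
          unfolding D_def uv(1) using pairsum[OF uv(2)] .
        have both: "s e = b e" if "u \<in> Y" "v \<in> Y"
        proof -
          have "e \<subseteq> Y" using uv(1) that by simp
          thus ?thesis using False eM by blast
        qed
        have sbe: "0 \<le> s e" "s e \<le> b e" using sb[OF eM] by auto
        have ab: "a e + b e = g u + g v" "g u \<le> a e" "g v \<le> a e" "b e \<le> g u" "b e \<le> g v"
          unfolding pair[OF uv(1)] by (auto simp: max_def min_def)
        show ?thesis
        proof (cases "u \<in> Y"; cases "v \<in> Y")
          assume "u \<in> Y" "v \<in> Y" thus ?thesis using De gu both ab sbe by simp
        next
          assume "u \<in> Y" "v \<notin> Y" thus ?thesis using De gu ab sbe by simp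
        next
          assume "u \<notin> Y" "v \<in> Y" thus ?thesis using De gu ab sbe by simp
        next
          assume "u \<notin> Y" "v \<notin> Y" thus ?thesis using De gu ab sbe by simp
        qed
      qed
      have sumDb: "sum D N \<le> sum a N - sum s N" if "N \<subseteq> M" for N
      proof -
        have "sum D N \<le> sum (\<lambda>e. a e - s e) N" using Db that by (intro sum_mono) auto
        thus ?thesis by (simp add: sum_subtractf)
      qed
      show ?thesis
      proof (cases "Y - \<Union>M = {}")
        case False
        then obtain w where w: "w \<in> Y" "w \<notin> \<Union>M" by blast
        have wV: "w \<in> V - \<Union>M" using w Y by blast
        have i: "sum g (V - \<Union>M) + sum a M \<le> measure lebesgue (L w)" using assms(5) wV unfolding a_def by blast
        have "sum g (Y - \<Union>M) \<le> sum g (V - \<Union>M)" using fin Y gnn by (intro sum_mono2) auto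
        thus ?thesis using dec sumDb[OF order_refl] atx[OF w(1)] i PPle by linarith
      next
        case True
        show ?thesis
        proof (cases "Y = {}")
          case True thus ?thesis by simp
        next
          case False
          then obtain y where y: "y \<in> Y" by blast
          hence "y \<in> \<Union>M" using \<open>Y - \<Union>M = {}\<close> by blast
          then obtain e0 where e0: "e0 \<in> M" "y \<in> e0" by blast
          obtain u v where uv: "e0 = {u, v}" "u \<noteq> v" "u \<in> V" "v \<in> V" using edge[OF e0(1)] by blast
          have gu: "g' u = g u - s e0" "g' v = g v - s e0" unfolding g'_def using sx_e[OF e0(1)] uv(1) by auto
          have De: "D e0 = (if u \<in> Y then g' u else 0) + (if v \<in> Y then g' v else 0)"
            unfolding D_def uv(1) using pairsum[OF uv(2)] .
          have both: "s e0 = b e0" if "u \<in> Y" "v \<in> Y"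
          proof -
            have "e0 \<subseteq> Y" using uv(1) that by simp
            thus ?thesis using \<open>\<not> (\<exists>e\<in>M. e \<subseteq> Y \<and> s e \<noteq> b e)\<close> e0(1) by blast
          qed
          have ab: "a e0 + b e0 = g u + g v" "g u \<le> a e0" "g v \<le> a e0" "b e0 \<le> g u" "b e0 \<le> g v"
            "a e0 = g u \<or> a e0 = g v"
            unfolding pair[OF uv(1)] by (auto simp: max_def min_def)
          obtain x where x: "x \<in> Y" "x \<in> e0" "D e0 \<le> g x - s e0"
          proof (cases "u \<in> Y \<and> v \<in> Y")
            case True
            hence sb0: "s e0 = b e0" using both by blast
            have Dv: "D e0 = g u + g v - 2 * s e0" using De gu True by simp
            show ?thesis
            proof (cases "a e0 = g u")
              case True
              show ?thesis
              proof (rule that[of u])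
                show "u \<in> Y" "u \<in> e0" using \<open>u \<in> Y \<and> v \<in> Y\<close> uv(1) by auto
                show "D e0 \<le> g u - s e0" using Dv sb0 ab True by linarith
              qed
            next
              case False
              hence av: "a e0 = g v" using ab(6) by blast
              show ?thesis
              proof (rule that[of v])
                show "v \<in> Y" "v \<in> e0" using \<open>u \<in> Y \<and> v \<in> Y\<close> uv(1) by auto
                show "D e0 \<le> g v - s e0" using Dv sb0 ab av by linarith
              qed
            qed
          next
            case False
            show ?thesis
            proof (cases "u \<in> Y")
              case True
              hence "v \<notin> Y" using False by blast
              hence "D e0 = g u - s e0" using De gu True by simp
              moreover have "u \<in> e0" using uv(1) by simp
              ultimately show ?thesis using that[of u] True by simp
            next
              case nu: False
              hence vY: "v \<in> Y" using y e0(2) uv(1) by blast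
              hence "D e0 = g v - s e0" using De gu nu by simp
              moreover have "v \<in> e0" using uv(1) by simp
              ultimately show ?thesis using that[of v] vY by simp
            qed
          qed
          have xM: "x \<in> \<Union>M" using x e0(1) by blast
          have xV: "x \<in> V" using x Y by blast
          have Mx: "{e \<in> M. x \<notin> e} = M - {e0}" using uniq x(2) e0(1) by blast
          have ii: "g x + sum a (M - {e0}) \<le> measure lebesgue (L x)"
            using assms(6) xM unfolding Mx[symmetric] a_def by blast
          have sM: "sum s M = s e0 + sum s (M - {e0})" using finM e0(1) by (rule sum.remove)
          have DM: "sum D M = D e0 + sum D (M - {e0})" using finM e0(1) by (rule sum.remove)
          have "sum D (M - {e0}) \<le> sum a (M - {e0}) - sum s (M - {e0})" by (rule sumDb) blast
          moreover have "sum g (Y - \<Union>M) = 0" unfolding \<open>Y - \<Union>M = {}\<close> by (rule sum.empty)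
          ultimately show ?thesis using dec DM sM x(3) ii atx[OF x(1)] PPle by linarith
        qed
      qed
    qed
  qed
  from hall_main[OF H, unfolded colb_def] obtain \<phi>' where p12:
    "(\<forall>x\<in>V. \<phi>' x \<in> sets lebesgue \<and> \<phi>' x \<subseteq> L' x \<and> g' x \<le> measure lebesgue (\<phi>' x)) \<and>
     (\<forall>x\<in>V. \<forall>y\<in>V. x \<noteq> y \<longrightarrow> \<phi>' x \<inter> \<phi>' y = {})" by (rule exE)
  note p1 = conjunct1[OF p12] and p2 = conjunct2[OF p12]
  define Px where "Px x = \<Union>(P ` {e\<in>M. x \<in> e})" for x
  have Px_e: "Px x = P e" if "e \<in> M" "x \<in> e" for x e
  proof -
    have E: "{e\<in>M. x \<in> e} = {e}" using that uniq by blast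
    show ?thesis unfolding Px_def E by simp
  qed
  have Px_0: "Px x = {}" if "x \<notin> \<Union>M" for x
  proof -
    have E: "{e\<in>M. x \<in> e} = {}" using that by blast
    show ?thesis unfolding Px_def E by simp
  qed
  have PxPP: "Px x \<subseteq> PP" for x unfolding Px_def PP_def by blast
  have Pxg: "Px x \<in> sets lebesgue" "Px x \<subseteq> {0..1}" "Px x \<subseteq> L x" "measure lebesgue (Px x) = sx x"
    if xV: "x \<in> V" for x
  proof -
    have "Px x \<in> sets lebesgue \<and> Px x \<subseteq> {0..1} \<and> Px x \<subseteq> L x \<and> measure lebesgue (Px x) = sx x"
    proof (cases "x \<in> \<Union>M")
      case True
      then obtain e where e: "e \<in> M" "x \<in> e" by blast
      obtain u v where uv: "e = {u, v}" "u \<noteq> v" "u \<in> V" "v \<in> V" using edge[OF e(1)] by blast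
      have "I e \<subseteq> L x" using pair(1)[OF uv(1)] e(2) uv(1) by auto
      moreover have "measure lebesgue (P e) = sx x" using sx_e[OF e] unfolding s_def by simp
      ultimately show ?thesis unfolding Px_e[OF e] using Pg[OF e(1)] by blast
    next
      case False thus ?thesis unfolding Px_0[OF False] sx_0[OF False] by simp
    qed
    thus "Px x \<in> sets lebesgue" "Px x \<subseteq> {0..1}" "Px x \<subseteq> L x" "measure lebesgue (Px x) = sx x" by auto
  qed
  have p1': "\<phi>' x \<in> sets lebesgue" "\<phi>' x \<subseteq> L x - PP" "g' x \<le> measure lebesgue (\<phi>' x)" if "x \<in> V" for x
    using p1 that unfolding L'_def by blast+
  show ?thesis unfolding frac_coloring_def
  proof (intro exI[of _ "\<lambda>x. \<phi>' x \<union> Px x"] conjI ballI impI)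
    fix x assume x: "x \<in> V"
    show "\<phi>' x \<union> Px x \<in> sets lebesgue" by (rule sets.Un[OF p1'(1)[OF x] Pxg(1)[OF x]])
    show "\<phi>' x \<union> Px x \<subseteq> L x" using p1'(2)[OF x] Pxg(3)[OF x] by blast
    have d: "\<phi>' x \<inter> Px x = {}" using p1'(2)[OF x] PxPP[of x] by blast
    have "\<phi>' x \<subseteq> {0..1}" using p1'(2)[OF x] Lg[OF x] by blast
    hence "measure lebesgue (\<phi>' x \<union> Px x) = measure lebesgue (\<phi>' x) + measure lebesgue (Px x)"
      by (rule mun[OF p1'(1)[OF x] _ Pxg(1)[OF x] Pxg(2)[OF x] d])
    thus "g x \<le> measure lebesgue (\<phi>' x \<union> Px x)" using p1'(3)[OF x] Pxg(4)[OF x] unfolding g'_def by simp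
  next
    fix x y assume x: "x \<in> V" and y: "y \<in> V" and xy: "{x, y} \<in> complete_edges V - M"
    have "{x, y} \<in> complete_edges V" using xy by (rule DiffD1)
    hence ne: "x \<noteq> y" by (rule pair_ne)
    have a1: "\<phi>' x \<inter> \<phi>' y = {}" using p2 x y ne by simp
    have a2: "\<phi>' x \<inter> Px y = {}" using p1'(2)[OF x] PxPP[of y] by blast
    have a3: "Px x \<inter> \<phi>' y = {}" using p1'(2)[OF y] PxPP[of x] by blast
    have a4: "Px x \<inter> Px y = {}"
    proof (cases "x \<in> \<Union>M \<and> y \<in> \<Union>M")
      case True
      then obtain e e' where e: "e \<in> M" "x \<in> e" and e': "e' \<in> M" "y \<in> e'" by blast
      have "e \<noteq> e'"
      proof
        assume "e = e'"
        obtain u v where uv: "e = {u, v}" "u \<noteq> v" "u \<in> V" "v \<in> V" using edge[OF e(1)] by blast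
        have "x \<in> {u, v}" "y \<in> {u, v}" using uv(1) e(2) e'(2) \<open>e = e'\<close> by simp_all
        hence "{x, y} = e" using dbl[OF _ _ ne] uv(1) by blast
        moreover have "{x, y} \<notin> M" using xy by simp
        ultimately show False using e(1) by blast
      qed
      hence "P e \<inter> P e' = {}" using P2 e(1) e'(1) by simp
      thus ?thesis unfolding Px_e[OF e] Px_e[OF e'] .
    next
      case False
      show ?thesis
      proof (cases "x \<in> \<Union>M")
        case True
        hence "y \<notin> \<Union>M" using False by simp
        thus ?thesis unfolding Px_0[OF \<open>y \<notin> \<Union>M\<close>] by simp
      next
        case nx: False
        show ?thesis unfolding Px_0[OF nx] by simp
      qed
    qed
    show "(\<phi>' x \<union> Px x) \<inter> (\<phi>' y \<union> Px y) = {}" by (rule un4[OF a1 a2 a3 a4])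
  qed
qed

end
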